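(* Under the hypotheses of Theorem 1 (stated in the context), with probability one there exist $n_0\in\mathbb N$ and $\varepsilon>0$ such that for every $n\ge n_0$ and every $j=1,\dots,r-1$ the function $\hat f_n$ has exactly one local minimizer $\hat m_{n,j}$ in $[m_j-\varepsilon,m_j+\varepsilon]$, and $\hat f_n$ has no other local minimizer in $(a,b)$. Moreover, with probability one, $\hat m_{n,j}\to m_j$ as $n\to\infty$ for every $j=1,\dots,r-1$.
   Context: Hypotheses: $P$ is a probability distribution on $\mathbb R$ with density $f$, $f=0$ outside $[a,b]$ ($a<b$), $f|_{[a,b]}$ is three times continuously differentiable on $[a,b]$ (one-sided at endpoints), $f'(a)\ne0$, $f'(b)\ne0$, $f$ has finitely many critical points in $(a,b)$, all with $f''\neq0$; $m_1<\dots<m_{r-1}$ are the local minimizers of $f$ in $(a,b)$. $(\hat f_n)$ are random functions on a common probability space, each twice continuously differentiable on $[a,b]$, with $\sup_{[a,b]}|\hat f_n^{(j)}-f^{(j)}|\to0$ almost surely for $j=1,2$. *)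

theory Defs
  imports "HOL-Probability.Probability"
begin

definition local_minimizer_in :: "real \<Rightarrow> real \<Rightarrow> (real \<Rightarrow> real) \<Rightarrow> real \<Rightarrow> bool" where
  "local_minimizer_in a b g x \<longleftrightarrow>
     x \<in> {a<..<b} \<and> (\<exists>\<delta>>0. \<forall>y. \<bar>y - x\<bar> < \<delta> \<longrightarrow> g x \<le> g y)"

end

theory Submission imports Defs begin

lemma cont_from_deriv:
  fixes h h' :: "real \<Rightarrow> real"
  assumes "\<forall>z\<in>S. DERIV h z :> h' z"
  shows "continuous_on S h"
  using assms by (meson DERIV_isCont continuous_at_imp_continuous_on)

lemma incr_open:
  fixes h h' :: "real \<Rightarrow> real"
  assumes D: "\<forall>z\<in>{s..t}. DERIV h z :> h' z" and P: "\<forall>z\<in>{s<..<t}. h' z > 0" and st: "s < t"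
  shows "h s < h t"
proof (rule DERIV_pos_imp_increasing_open[OF st])
  show "continuous_on {s..t} h" using cont_from_deriv[OF D] .
  fix x assume "s < x" "x < t"
  then show "\<exists>y. DERIV h x :> y \<and> y > 0" using D P by (intro exI[of _ "h' x"]) auto
qed

lemma decr_open:
  fixes h h' :: "real \<Rightarrow> real"
  assumes D: "\<forall>z\<in>{s..t}. DERIV h z :> h' z" and P: "\<forall>z\<in>{s<..<t}. h' z < 0" and st: "s < t"
  shows "h s > h t"
proof (rule DERIV_neg_imp_decreasing_open[OF st])
  show "continuous_on {s..t} h" using cont_from_deriv[OF D] .
  fix x assume "s < x" "x < t"
  then show "\<exists>y. DERIV h x :> y \<and> y < 0" using D P by (intro exI[of _ "h' x"]) auto
qed

lemma lmin_suff:
  fixes g g1 :: "real \<Rightarrow> real"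
  assumes e: "e > 0" and D: "\<forall>y\<in>{x-e..x+e}. DERIV g y :> g1 y"
    and L: "\<forall>y\<in>{x-e..<x}. g1 y < 0" and R: "\<forall>y\<in>{x<..x+e}. g1 y > 0"
  shows "\<forall>y. \<bar>y - x\<bar> < e \<longrightarrow> g x \<le> g y"
proof (intro allI impI)
  fix y assume y: "\<bar>y - x\<bar> < e"
  consider "y < x" | "y = x" | "y > x" by linarith
  then show "g x \<le> g y"
  proof cases
    case 1
    have "g y > g x"
      by (rule decr_open[OF _ _ 1, of g g1]) (use D L y 1 in auto)
    then show ?thesis by simp
  next
    case 3
    have "g x < g y"
      by (rule incr_open[OF _ _ 3, of g g1]) (use D R y 3 in auto)
    then show ?thesis by simp
  qed simp
qed

lemma lmin_not:
  fixes g g1 :: "real \<Rightarrow> real"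
  assumes e: "e > 0" and D: "\<forall>y\<in>{x..x+e}. DERIV g y :> g1 y"
    and R: "\<forall>y\<in>{x<..x+e}. g1 y < 0"
  shows "\<not> (\<exists>\<delta>>0. \<forall>y. \<bar>y - x\<bar> < \<delta> \<longrightarrow> g x \<le> g y)"
proof
  assume "\<exists>\<delta>>0. \<forall>y. \<bar>y - x\<bar> < \<delta> \<longrightarrow> g x \<le> g y"
  then obtain \<delta> where d: "\<delta> > 0" "\<forall>y. \<bar>y - x\<bar> < \<delta> \<longrightarrow> g x \<le> g y" by auto
  define y where "y = x + min \<delta> e / 2"
  have xy: "x < y" "y \<le> x + e" "\<bar>y - x\<bar> < \<delta>" using d e by (auto simp: y_def)
  have "g x > g y"
    by (rule decr_open[OF _ _ xy(1), of g g1]) (use D R xy in auto)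
  with d xy show False by (meson not_le)
qed

lemma finite_eps:
  assumes "finite C" "\<forall>c\<in>C. \<exists>e>0. \<forall>e'. 0 < e' \<and> e' \<le> e \<longrightarrow> P c e'"
  shows "\<exists>e>0. \<forall>e'. 0 < e' \<and> e' \<le> (e::real) \<longrightarrow> (\<forall>c\<in>C. P c e')"
  using assms
proof (induction C rule: finite_induct)
  case empty
  show ?case by (auto intro: exI[of _ 1])
next
  case (insert c C)
  obtain e1 where e1: "e1 > 0" "\<forall>e'. 0 < e' \<and> e' \<le> e1 \<longrightarrow> (\<forall>c\<in>C. P c e')" using insert by auto
  obtain e2 where e2: "e2 > 0" "\<forall>e'. 0 < e' \<and> e' \<le> e2 \<longrightarrow> P c e'" using insert by auto
  show ?case using e1 e2 by (intro exI[of _ "min e1 e2"]) auto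
qed

lemma lmin_fermat:
  assumes "local_minimizer_in a b g x" "DERIV g x :> l"
  shows "l = 0"
proof -
  obtain d where "d > 0" "\<forall>y. \<bar>y - x\<bar> < d \<longrightarrow> g x \<le> g y"
    using assms(1) unfolding local_minimizer_in_def by auto
  then show ?thesis using DERIV_local_min[OF assms(2), of d] by (simp add: abs_minus_commute)
qed

lemma one_min:
  fixes G G1 G2 :: "real \<Rightarrow> real"
  assumes ac: "a < c - e" and cb: "c + e < b" and e: "e > 0"
    and D: "\<forall>y\<in>{c-e..c+e}. DERIV G y :> G1 y" and D1: "\<forall>y\<in>{c-e..c+e}. DERIV G1 y :> G2 y"
    and P: "\<forall>y\<in>{c-e..c+e}. G2 y > 0" and l: "G1 (c-e) < 0" and r: "G1 (c+e) > 0"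
  shows "\<exists>!x. x \<in> {c-e..c+e} \<and> local_minimizer_in a b G x"
proof -
  have inc: "G1 s < G1 t" if "c-e \<le> s" "s < t" "t \<le> c+e" for s t
    by (rule incr_open[OF _ _ \<open>s < t\<close>, of G1 G2]) (use D1 P that in auto)
  have cG1: "continuous_on {c-e..c+e} G1" using cont_from_deriv[OF D1] .
  obtain x0 where x0: "c-e \<le> x0" "x0 \<le> c+e" "G1 x0 = 0"
    using IVT'[of G1 "c-e" 0 "c+e", OF _ _ _ cG1] l r e by auto
  have x0': "c-e < x0" "x0 < c+e" using x0 l r by (auto simp: order_le_less)
  define d where "d = min (x0-(c-e)) (c+e-x0)"
  have d: "d > 0" using x0' by (simp add: d_def)
  have "\<forall>y. \<bar>y - x0\<bar> < d \<longrightarrow> G x0 \<le> G y"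
  proof (rule lmin_suff[OF d, where g=G])
    show "\<forall>y\<in>{x0 - d..x0 + d}. DERIV G y :> G1 y"
    proof
      fix y assume "y \<in> {x0 - d..x0 + d}"
      then have "y \<in> {c-e..c+e}" unfolding d_def by auto
      then show "DERIV G y :> G1 y" using D by auto
    qed
    show "\<forall>y\<in>{x0 - d..<x0}. G1 y < 0" using inc[of _ x0] x0 by (auto simp: d_def)
    show "\<forall>y\<in>{x0<..x0 + d}. 0 < G1 y" using inc[of x0] x0 by (auto simp: d_def)
  qed
  then have m0: "local_minimizer_in a b G x0"
    unfolding local_minimizer_in_def using d x0' ac cb by auto
  show ?thesis
  proof (rule ex1I[of _ x0])
    show "x0 \<in> {c - e..c + e} \<and> local_minimizer_in a b G x0" using m0 x0 by auto
    fix y assume y: "y \<in> {c - e..c + e} \<and> local_minimizer_in a b G y"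
    then have "G1 y = 0" using lmin_fermat[of a b G y] D by auto
    then show "y = x0" using inc[of y x0] inc[of x0 y] x0 y
      by (cases y x0 rule: linorder_cases) auto
  qed
qed

lemma no_min:
  fixes G G1 G2 :: "real \<Rightarrow> real"
  assumes D: "\<forall>y\<in>{c-e..c+e}. DERIV G y :> G1 y" and D1: "\<forall>y\<in>{c-e..c+e}. DERIV G1 y :> G2 y"
    and P: "\<forall>y\<in>{c-e..c+e}. G2 y < 0" and x: "x \<in> {c-e<..<c+e}"
  shows "\<not> local_minimizer_in a b G x"
proof
  assume m: "local_minimizer_in a b G x"
  have "G1 x = 0" using lmin_fermat[OF m] D x by auto
  define d where "d = c + e - x"
  have d: "d > 0" using x by (simp add: d_def)
  have dec: "G1 s > G1 t" if "c-e \<le> s" "s < t" "t \<le> c+e" for s t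
    by (rule decr_open[OF _ _ \<open>s < t\<close>, of G1 G2]) (use D1 P that in auto)
  have "\<not> (\<exists>\<delta>>0. \<forall>y. \<bar>y - x\<bar> < \<delta> \<longrightarrow> G x \<le> G y)"
  proof (rule lmin_not[OF d, where g=G])
    show "\<forall>y\<in>{x..x + d}. DERIV G y :> G1 y" using D x by (auto simp: d_def)
    show "\<forall>y\<in>{x<..x + d}. G1 y < 0" using dec[of x] x \<open>G1 x = 0\<close> by (auto simp: d_def)
  qed
  then show False using m unfolding local_minimizer_in_def by auto
qed

lemma lin_bound:
  fixes G1 G2 :: "real \<Rightarrow> real"
  assumes D1: "\<forall>y\<in>{c-e..c+e}. DERIV G1 y :> G2 y"
    and P: "\<forall>y\<in>{c-e..c+e}. G2 y \<ge> k" and z: "G1 c = 0" and y: "y \<in> {c-e..c+e}"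
  shows "(y \<le> c \<longrightarrow> G1 y \<le> k*(y-c)) \<and> (c \<le> y \<longrightarrow> G1 y \<ge> k*(y-c))"
proof -
  have mono: "G1 s - k * s \<le> G1 t - k * t" if "c-e \<le> s" "s \<le> t" "t \<le> c+e" for s t
  proof (rule DERIV_nonneg_imp_nondecreasing[OF \<open>s \<le> t\<close>])
    fix x assume "s \<le> x" "x \<le> t"
    then have x: "x \<in> {c-e..c+e}" using that by auto
    have "DERIV (\<lambda>y. G1 y - k*y) x :> G2 x - k"
      using D1 x by (auto intro!: derivative_eq_intros)
    then show "\<exists>y. DERIV (\<lambda>y. G1 y - k*y) x :> y \<and> y \<ge> 0" using P x by (intro exI[of _ "G2 x - k"]) auto
  qed
  show ?thesis using mono[of y c] mono[of c y] y z by (auto simp: algebra_simps)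
qed


lemma det:
  fixes f f1 f2 :: "real \<Rightarrow> real" and G G1 G2 :: "nat \<Rightarrow> real \<Rightarrow> real" and m :: "nat \<Rightarrow> real"
  assumes ab: "a < b"
    and Df: "\<forall>x\<in>{a<..<b}. DERIV f x :> f1 x"
    and Df1: "\<forall>x\<in>{a<..<b}. DERIV f1 x :> f2 x"
    and cf1: "continuous_on {a..b} f1"
    and cf2: "continuous_on {a..b} f2"
    and fa: "f1 a \<noteq> 0" and fb: "f1 b \<noteq> 0"
    and crit_fin: "finite {x\<in>{a<..<b}. f1 x = 0}"
    and crit_nondeg: "\<forall>x\<in>{a<..<b}. f1 x = 0 \<longrightarrow> f2 x \<noteq> 0"
    and m_minima: "{x. local_minimizer_in a b f x} = m ` {1..<r}"
    and DG: "\<forall>n. \<forall>x\<in>{a<..<b}. DERIV (G n) x :> G1 n x"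
    and DG1: "\<forall>n. \<forall>x\<in>{a<..<b}. DERIV (G1 n) x :> G2 n x"
    and U1: "uniform_limit {a..b} G1 f1 sequentially"
    and U2: "uniform_limit {a..b} G2 f2 sequentially"
  shows "\<exists>n0 \<epsilon>. \<epsilon> > 0 \<and>
           (\<forall>n\<ge>n0.
              (\<forall>j\<in>{1..<r}. \<exists>!x. x \<in> {m j - \<epsilon>..m j + \<epsilon>} \<and> local_minimizer_in a b (G n) x) \<and>
              (\<forall>x. local_minimizer_in a b (G n) x \<longrightarrow>
                    (\<exists>j\<in>{1..<r}. x \<in> {m j - \<epsilon>..m j + \<epsilon>}))) \<and>
           (\<forall>j\<in>{1..<r}.
              (\<lambda>n. THE x. x \<in> {m j - \<epsilon>..m j + \<epsilon>} \<and> local_minimizer_in a b (G n) x)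
                \<longlonglongrightarrow> m j)"
proof -
  define C where "C = {x\<in>{a<..<b}. f1 x = 0}"
  have fC: "finite C" using crit_fin by (simp add: C_def)
  have C2: "\<forall>c\<in>C. f2 c \<noteq> 0" using crit_nondeg by (auto simp: C_def)
  have icf2: "\<forall>c\<in>C. continuous (at c) f2"
    using continuous_on_interior[OF cf2] by (auto simp: C_def)
  have "\<exists>e>0. \<forall>e'. 0 < e' \<and> e' \<le> e \<longrightarrow> (\<forall>c\<in>C. a < c - e' \<and> c + e' < b \<and>
          (\<forall>y\<in>{c-e'..c+e'}. \<bar>f2 y - f2 c\<bar> \<le> \<bar>f2 c\<bar> / 2))"
  proof (rule finite_eps[OF fC], intro ballI)
    fix c assume c: "c \<in> C"
    then have "\<bar>f2 c\<bar> / 2 > 0" using C2 by auto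
    then obtain d where d: "d > 0" "\<forall>y. dist y c < d \<longrightarrow> dist (f2 y) (f2 c) < \<bar>f2 c\<bar> / 2"
      using icf2 c unfolding continuous_at_eps_delta by blast
    have cab: "a < c" "c < b" using c by (auto simp: C_def)
    show "\<exists>e>0. \<forall>e'. 0 < e' \<and> e' \<le> e \<longrightarrow> a < c - e' \<and> c + e' < b \<and>
          (\<forall>y\<in>{c-e'..c+e'}. \<bar>f2 y - f2 c\<bar> \<le> \<bar>f2 c\<bar> / 2)"
    proof (intro exI[of _ "min (d/2) (min ((c-a)/2) ((b-c)/2))"] conjI allI impI ballI)
      fix e' y assume e': "0 < e' \<and> e' \<le> min (d / 2) (min ((c - a) / 2) ((b - c) / 2))"
        and y: "y \<in> {c - e'..c + e'}"
      then have "dist y c < d" by (auto simp: dist_real_def abs_le_iff)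
      then show "\<bar>f2 y - f2 c\<bar> \<le> \<bar>f2 c\<bar> / 2" using d by (auto simp: dist_real_def)
    qed (use d cab in auto)
  qed
  then obtain \<epsilon> where eps: "\<epsilon> > 0" and epsC: "\<forall>c\<in>C. a < c - \<epsilon> \<and> c + \<epsilon> < b \<and>
          (\<forall>y\<in>{c-\<epsilon>..c+\<epsilon>}. \<bar>f2 y - f2 c\<bar> \<le> \<bar>f2 c\<bar> / 2)"
    by (meson order_refl)
  have "\<exists>e>0. \<forall>e'. 0 < e' \<and> e' \<le> e \<longrightarrow> (\<forall>c\<in>C. 2 * e' \<le> \<bar>f2 c\<bar>)"
  proof (rule finite_eps[OF fC], intro ballI)
    fix c assume c: "c \<in> C"
    then have "\<bar>f2 c\<bar> / 2 > 0" using C2 by auto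
    then show "\<exists>e>0. \<forall>e'. 0 < e' \<and> e' \<le> e \<longrightarrow> 2 * e' \<le> \<bar>f2 c\<bar>"
      by (intro exI[of _ "\<bar>f2 c\<bar> / 2"]) auto
  qed
  then obtain \<kappa> where kap: "\<kappa> > 0" and kapC: "\<forall>c\<in>C. 2 * \<kappa> \<le> \<bar>f2 c\<bar>"
    by (meson order_refl)
  have pos: "\<forall>y\<in>{c-\<epsilon>..c+\<epsilon>}. f2 y \<ge> \<kappa>" if "c \<in> C" "f2 c > 0" for c
  proof
    fix y assume y: "y \<in> {c-\<epsilon>..c+\<epsilon>}"
    have "\<bar>f2 y - f2 c\<bar> \<le> \<bar>f2 c\<bar> / 2" using epsC that y by blast
    moreover have "2 * \<kappa> \<le> \<bar>f2 c\<bar>" using kapC that by blast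
    ultimately show "f2 y \<ge> \<kappa>" using that by (auto simp: abs_le_iff abs_if split: if_splits)
  qed
  have neg: "\<forall>y\<in>{c-\<epsilon>..c+\<epsilon>}. f2 y \<le> -\<kappa>" if "c \<in> C" "f2 c < 0" for c
  proof
    fix y assume y: "y \<in> {c-\<epsilon>..c+\<epsilon>}"
    have "\<bar>f2 y - f2 c\<bar> \<le> \<bar>f2 c\<bar> / 2" using epsC that y by blast
    moreover have "2 * \<kappa> \<le> \<bar>f2 c\<bar>" using kapC that by blast
    ultimately show "f2 y \<le> -\<kappa>" using that by (auto simp: abs_le_iff abs_if split: if_splits)
  qed
  have Isub: "{c-\<epsilon>..c+\<epsilon>} \<subseteq> {a<..<b}" if "c \<in> C" for c
    using epsC that by force
  have Isub': "{c-\<epsilon><..<c+\<epsilon>} \<subseteq> {a<..<b}" if "c \<in> C" for c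
    using Isub[OF that] by auto
  have DfI: "\<forall>y\<in>{c-\<epsilon>..c+\<epsilon>}. DERIV f y :> f1 y" if "c \<in> C" for c
    using Isub[OF that] Df by blast
  have Df1I: "\<forall>y\<in>{c-\<epsilon>..c+\<epsilon>}. DERIV f1 y :> f2 y" if "c \<in> C" for c
    using Isub[OF that] Df1 by blast
  have DGI: "\<forall>y\<in>{c-\<epsilon>..c+\<epsilon>}. DERIV (G n) y :> G1 n y" if "c \<in> C" for c n
    using Isub[OF that] DG by blast
  have DG1I: "\<forall>y\<in>{c-\<epsilon>..c+\<epsilon>}. DERIV (G1 n) y :> G2 n y" if "c \<in> C" for c n
    using Isub[OF that] DG1 by blast
  have f1c: "f1 c = 0" if "c \<in> C" for c using that by (simp add: C_def)
  have linb: "(y \<le> c \<longrightarrow> f1 y \<le> \<kappa>*(y-c)) \<and> (c \<le> y \<longrightarrow> f1 y \<ge> \<kappa>*(y-c))"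
    if "c \<in> C" "f2 c > 0" "y \<in> {c-\<epsilon>..c+\<epsilon>}" for c y
    by (rule lin_bound[OF Df1I[OF that(1)] pos[OF that(1,2)] f1c[OF that(1)] that(3)])
  have minf: "local_minimizer_in a b f c" if "c \<in> C" "f2 c > 0" for c
  proof -
    have "\<forall>y. \<bar>y - c\<bar> < \<epsilon> \<longrightarrow> f c \<le> f y"
    proof (rule lmin_suff[OF eps DfI[OF that(1)]])
      show "\<forall>y\<in>{c - \<epsilon>..<c}. f1 y < 0"
      proof
        fix y assume y: "y \<in> {c - \<epsilon>..<c}"
        then have "f1 y \<le> \<kappa>*(y-c)" using linb[OF that, of y] by auto
        also have "\<dots> < 0" using y kap by (simp add: mult_pos_neg)
        finally show "f1 y < 0" .
      qed
      show "\<forall>y\<in>{c<..c + \<epsilon>}. 0 < f1 y"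
      proof
        fix y assume y: "y \<in> {c<..c + \<epsilon>}"
        have "0 < \<kappa>*(y-c)" using y kap by simp
        also have "\<dots> \<le> f1 y" using linb[OF that, of y] y by auto
        finally show "0 < f1 y" .
      qed
    qed
    then show ?thesis unfolding local_minimizer_in_def using that eps by (auto simp: C_def)
  qed
  have minf_inv: "x \<in> C \<and> f2 x > 0" if "local_minimizer_in a b f x" for x
  proof -
    have x: "x \<in> {a<..<b}" using that by (simp add: local_minimizer_in_def)
    have "f1 x = 0" using lmin_fermat[OF that] Df x by auto
    then have xC: "x \<in> C" using x by (simp add: C_def)
    have "\<not> f2 x < 0"
    proof
      assume "f2 x < 0"
      then have "\<forall>y\<in>{x-\<epsilon>..x+\<epsilon>}. f2 y < 0" using neg[OF xC] kap by force
      then have "\<not> local_minimizer_in a b f x"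
        using no_min[OF DfI[OF xC] Df1I[OF xC]] eps by auto
      then show False using that by simp
    qed
    then show ?thesis using xC C2 by force
  qed
  have mset: "m ` {1..<r} = {c\<in>C. f2 c > 0}"
    using m_minima minf minf_inv by blast
  define K where "K = {a..b} - (\<Union>c\<in>C. {c-\<epsilon><..<c+\<epsilon>})"
  have cK: "compact K"
  proof -
    have "K = {a..b} \<inter> - (\<Union>c\<in>C. {c-\<epsilon><..<c+\<epsilon>})" by (auto simp: K_def)
    moreover have "closed (- (\<Union>c\<in>C. {c-\<epsilon><..<c+\<epsilon>}))" by (intro closed_Compl open_UN) auto
    ultimately show ?thesis by (simp add: compact_Int_closed)
  qed
  have f1K: "\<forall>x\<in>K. f1 x \<noteq> 0"
  proof
    fix x assume x: "x \<in> K"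
    show "f1 x \<noteq> 0"
    proof
      assume z: "f1 x = 0"
      have "x \<in> {a..b}" using x by (simp add: K_def)
      then have "x \<in> {a<..<b}" using z fa fb by (cases "x = a \<or> x = b") auto
      then have "x \<in> C" using z by (simp add: C_def)
      then show False using x eps by (auto simp: K_def)
    qed
  qed
  obtain \<eta> where eta: "\<eta> > 0" "\<forall>x\<in>K. \<eta> \<le> \<bar>f1 x\<bar>"
  proof (cases "K = {}")
    case True then show ?thesis using that[of 1] by auto
  next
    case False
    have "continuous_on K (\<lambda>x. \<bar>f1 x\<bar>)"
      by (rule continuous_on_rabs, rule continuous_on_subset[OF cf1]) (auto simp: K_def)
    then obtain x0 where "x0 \<in> K" "\<forall>y\<in>K. \<bar>f1 x0\<bar> \<le> \<bar>f1 y\<bar>"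
      using continuous_attains_inf[OF cK False] by blast
    then show ?thesis using that[of "\<bar>f1 x0\<bar>"] f1K by auto
  qed
  have ev: "\<forall>\<^sub>F n in sequentially. \<forall>x\<in>{a..b}. \<bar>G1 n x - f1 x\<bar> < min \<eta> (\<kappa>*\<epsilon>) \<and> \<bar>G2 n x - f2 x\<bar> < \<kappa>"
  proof -
    have "\<forall>\<^sub>F n in sequentially. \<forall>x\<in>{a..b}. dist (G1 n x) (f1 x) < min \<eta> (\<kappa>*\<epsilon>)"
      using U1 eta kap eps unfolding uniform_limit_iff by (meson min_less_iff_conj mult_pos_pos)
    moreover have "\<forall>\<^sub>F n in sequentially. \<forall>x\<in>{a..b}. dist (G2 n x) (f2 x) < \<kappa>"
      using U2 kap unfolding uniform_limit_iff by simp
    ultimately show ?thesis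
      by eventually_elim (auto simp: dist_real_def)
  qed
  then obtain N where N: "\<forall>n\<ge>N. \<forall>x\<in>{a..b}. \<bar>G1 n x - f1 x\<bar> < min \<eta> (\<kappa>*\<epsilon>) \<and> \<bar>G2 n x - f2 x\<bar> < \<kappa>"
    by (auto simp: eventually_sequentially)
  have uniqC: "\<exists>!x. x \<in> {c-\<epsilon>..c+\<epsilon>} \<and> local_minimizer_in a b (G n) x"
    if n: "n \<ge> N" and c: "c \<in> C" "f2 c > 0" for n c
  proof (rule one_min[OF _ _ eps DGI[OF c(1)] DG1I[OF c(1)]])
    show "a < c - \<epsilon>" "c + \<epsilon> < b" using epsC c by auto
    have Ic: "{c-\<epsilon>..c+\<epsilon>} \<subseteq> {a..b}" using epsC c(1) by auto
    show "\<forall>y\<in>{c - \<epsilon>..c + \<epsilon>}. 0 < G2 n y"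
    proof
      fix y assume y: "y \<in> {c - \<epsilon>..c + \<epsilon>}"
      then have "\<bar>G2 n y - f2 y\<bar> < \<kappa>" using N n Ic by blast
      moreover have "f2 y \<ge> \<kappa>" using pos[OF c] y by blast
      ultimately show "0 < G2 n y" by linarith
    qed
    have e1: "c - \<epsilon> \<in> {c-\<epsilon>..c+\<epsilon>}" "c + \<epsilon> \<in> {c-\<epsilon>..c+\<epsilon>}" using eps by auto
    have "\<bar>G1 n (c-\<epsilon>) - f1 (c-\<epsilon>)\<bar> < \<kappa>*\<epsilon>" using N n Ic e1 by fastforce
    moreover have "f1 (c-\<epsilon>) \<le> \<kappa>*((c-\<epsilon>)-c)" using linb[OF c e1(1)] eps by auto
    ultimately show "G1 n (c - \<epsilon>) < 0" by (simp add: algebra_simps)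
    have "\<bar>G1 n (c+\<epsilon>) - f1 (c+\<epsilon>)\<bar> < \<kappa>*\<epsilon>" using N n Ic e1 by fastforce
    moreover have "f1 (c+\<epsilon>) \<ge> \<kappa>*((c+\<epsilon>)-c)" using linb[OF c e1(2)] eps by auto
    ultimately show "0 < G1 n (c + \<epsilon>)" by (simp add: algebra_simps)
  qed
  have locC: "\<exists>c\<in>C. f2 c > 0 \<and> x \<in> {c-\<epsilon>..c+\<epsilon>}"
    if n: "n \<ge> N" and x: "local_minimizer_in a b (G n) x" for n x
  proof -
    have xab: "x \<in> {a<..<b}" using x by (simp add: local_minimizer_in_def)
    have G0: "G1 n x = 0" using lmin_fermat[OF x] DG xab by auto
    have "x \<notin> K"
    proof
      assume xK: "x \<in> K"
      then have "\<bar>G1 n x - f1 x\<bar> < \<eta>" using N n xab by fastforce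
      then show False using eta xK G0 by fastforce
    qed
    then obtain c where c: "c \<in> C" "x \<in> {c-\<epsilon><..<c+\<epsilon>}" using xab by (auto simp: K_def)
    have "\<not> f2 c < 0"
    proof
      assume "f2 c < 0"
      have Ic: "{c-\<epsilon>..c+\<epsilon>} \<subseteq> {a..b}" using epsC c(1) by auto
      have "\<forall>y\<in>{c-\<epsilon>..c+\<epsilon>}. G2 n y < 0"
      proof
        fix y assume y: "y \<in> {c - \<epsilon>..c + \<epsilon>}"
        then have "\<bar>G2 n y - f2 y\<bar> < \<kappa>" using N n Ic by blast
        moreover have "f2 y \<le> -\<kappa>" using neg[OF c(1) \<open>f2 c < 0\<close>] y by blast
        ultimately show "G2 n y < 0" by linarith
      qed
      then show False using no_min[OF DGI[OF c(1)] DG1I[OF c(1)] _ c(2)] x by blast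
    qed
    then show ?thesis using c C2 by force
  qed
  show ?thesis
  proof (intro exI[of _ N] exI[of _ \<epsilon>] conjI allI impI ballI eps)
    fix n j assume n: "N \<le> n" and j: "j \<in> {1..<r}"
    have "m j \<in> C \<and> f2 (m j) > 0" using mset j by blast
    then show "\<exists>!x. x \<in> {m j - \<epsilon>..m j + \<epsilon>} \<and> local_minimizer_in a b (G n) x"
      using uniqC n by blast
  next
    fix n x assume n: "N \<le> n" and x: "local_minimizer_in a b (G n) x"
    then obtain c where "c \<in> C" "f2 c > 0" "x \<in> {c-\<epsilon>..c+\<epsilon>}" using locC by blast
    then show "\<exists>j\<in>{1..<r}. x \<in> {m j - \<epsilon>..m j + \<epsilon>}" using mset by force
  next
    fix j assume j: "j \<in> {1..<r}"
    define c where "c = m j"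
    have c: "c \<in> C" "f2 c > 0" using mset j by (auto simp: c_def)
    define X where "X n = (THE x. x \<in> {c - \<epsilon>..c + \<epsilon>} \<and> local_minimizer_in a b (G n) x)" for n
    have X: "X n \<in> {c - \<epsilon>..c + \<epsilon>} \<and> local_minimizer_in a b (G n) (X n)" if "n \<ge> N" for n
      unfolding X_def by (rule theI'[OF uniqC[OF that c]])
    have "X \<longlonglongrightarrow> c"
      unfolding tendsto_iff
    proof (intro allI impI)
      fix e :: real assume e: "e > 0"
      have "\<forall>\<^sub>F n in sequentially. \<forall>x\<in>{a..b}. dist (G1 n x) (f1 x) < \<kappa> * e"
        using U1 e kap unfolding uniform_limit_iff by simp
      moreover have "\<forall>\<^sub>F n in sequentially. n \<ge> N" by (simp add: eventually_ge_at_top)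
      ultimately show "\<forall>\<^sub>F n in sequentially. dist (X n) c < e"
      proof eventually_elim
        case (elim n)
        have Xn: "X n \<in> {c - \<epsilon>..c + \<epsilon>}" "local_minimizer_in a b (G n) (X n)" using X elim by auto
        have xab: "X n \<in> {a<..<b}" using Xn(2) by (simp add: local_minimizer_in_def)
        have G0: "G1 n (X n) = 0" using lmin_fermat[OF Xn(2)] DG xab by auto
        have "X n \<in> {a..b}" using xab by auto
        then have "dist (G1 n (X n)) (f1 (X n)) < \<kappa> * e" using elim by blast
        then have "\<bar>f1 (X n)\<bar> < \<kappa> * e" using G0 by (simp add: dist_real_def)
        moreover have "\<kappa> * \<bar>X n - c\<bar> \<le> \<bar>f1 (X n)\<bar>"
          using linb[OF c Xn(1)] kap by (cases "X n \<le> c") (auto simp: abs_if algebra_simps)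
        ultimately have "\<kappa> * \<bar>X n - c\<bar> < \<kappa> * e" by linarith
        then show ?case using kap by (simp add: dist_real_def)
      qed
    qed
    then show "(\<lambda>n. THE x. x \<in> {m j - \<epsilon>..m j + \<epsilon>} \<and> local_minimizer_in a b (G n) x) \<longlonglongrightarrow> m j"
      unfolding X_def c_def .
  qed
qed


lemma within_to_at:
  fixes g g' :: "real \<Rightarrow> real"
  assumes "\<forall>x\<in>{a..b}. (g has_real_derivative g' x) (at x within {a..b})"
  shows "\<forall>x\<in>{a<..<b}. DERIV g x :> g' x"
proof
  fix x :: real assume x: "x \<in> {a<..<b}"
  have "(g has_real_derivative g' x) (at x within {a<..<b})"
    by (rule has_field_derivative_subset[of _ _ _ "{a..b}"]) (use assms x in auto)
  then show "DERIV g x :> g' x" using at_within_open[OF x] by simp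
qed

theorem mainTheorem2:
  fixes M :: "'s measure"
    and a b :: real
    and f f1 f2 f3 :: "real \<Rightarrow> real"
    and r :: nat and m :: "nat \<Rightarrow> real"
    and fh fh1 fh2 :: "nat \<Rightarrow> 's \<Rightarrow> real \<Rightarrow> real"
  assumes M: "prob_space M"
    and ab: "a < b"
    and f_nonneg: "\<forall>x. 0 \<le> f x"
    and f_int: "(f has_integral 1) UNIV"
    and f_out: "\<forall>x. x \<notin> {a..b} \<longrightarrow> f x = 0"
    and d1: "\<forall>x\<in>{a..b}. (f has_real_derivative f1 x) (at x within {a..b})"
    and d2: "\<forall>x\<in>{a..b}. (f1 has_real_derivative f2 x) (at x within {a..b})"
    and d3: "\<forall>x\<in>{a..b}. (f2 has_real_derivative f3 x) (at x within {a..b})"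
    and c3: "continuous_on {a..b} f3"
    and fa: "f1 a \<noteq> 0" and fb: "f1 b \<noteq> 0"
    and crit_fin: "finite {x\<in>{a<..<b}. f1 x = 0}"
    and crit_nondeg: "\<forall>x\<in>{a<..<b}. f1 x = 0 \<longrightarrow> f2 x \<noteq> 0"
    and m_mono: "strict_mono_on {1..<r} m"
    and m_minima: "{x. local_minimizer_in a b f x} = m ` {1..<r}"
    and fh_meas: "\<forall>n x. (\<lambda>\<omega>. fh n \<omega> x) \<in> borel_measurable M"
    and dh1: "\<forall>n \<omega>. \<forall>x\<in>{a..b}. (fh n \<omega> has_real_derivative fh1 n \<omega> x) (at x within {a..b})"
    and dh2: "\<forall>n \<omega>. \<forall>x\<in>{a..b}. (fh1 n \<omega> has_real_derivative fh2 n \<omega> x) (at x within {a..b})"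
    and ch2: "\<forall>n \<omega>. continuous_on {a..b} (fh2 n \<omega>)"
    and unif1: "AE \<omega> in M. uniform_limit {a..b} (\<lambda>n. fh1 n \<omega>) f1 sequentially"
    and unif2: "AE \<omega> in M. uniform_limit {a..b} (\<lambda>n. fh2 n \<omega>) f2 sequentially"
  shows "AE \<omega> in M. \<exists>n0 \<epsilon>. \<epsilon> > 0 \<and>
           (\<forall>n\<ge>n0.
              (\<forall>j\<in>{1..<r}. \<exists>!x. x \<in> {m j - \<epsilon>..m j + \<epsilon>} \<and> local_minimizer_in a b (fh n \<omega>) x) \<and>
              (\<forall>x. local_minimizer_in a b (fh n \<omega>) x \<longrightarrow>
                    (\<exists>j\<in>{1..<r}. x \<in> {m j - \<epsilon>..m j + \<epsilon>}))) \<and>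
           (\<forall>j\<in>{1..<r}.
              (\<lambda>n. THE x. x \<in> {m j - \<epsilon>..m j + \<epsilon>} \<and> local_minimizer_in a b (fh n \<omega>) x)
                \<longlonglongrightarrow> m j)"
proof -
  have Df: "\<forall>x\<in>{a<..<b}. DERIV f x :> f1 x" using within_to_at[OF d1] .
  have Df1: "\<forall>x\<in>{a<..<b}. DERIV f1 x :> f2 x" using within_to_at[OF d2] .
  have cf1: "continuous_on {a..b} f1" by (rule DERIV_continuous_on[of _ _ f2]) (use d2 in auto)
  have cf2: "continuous_on {a..b} f2" by (rule DERIV_continuous_on[of _ _ f3]) (use d3 in auto)
  show ?thesis
    using unif1 unif2
  proof eventually_elim
    case (elim \<omega>)
    have DG: "\<forall>n. \<forall>x\<in>{a<..<b}. DERIV (fh n \<omega>) x :> fh1 n \<omega> x"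
      using within_to_at dh1 by blast
    have DG1: "\<forall>n. \<forall>x\<in>{a<..<b}. DERIV (fh1 n \<omega>) x :> fh2 n \<omega> x"
      using within_to_at dh2 by blast
    show ?case
      by (rule det[OF ab Df Df1 cf1 cf2 fa fb crit_fin crit_nondeg m_minima DG DG1 elim])
  qed
qed

end
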